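(* Let $G=(V,E)$ be an undirected graph (finite or infinite) and $M=M(S)$, $M'=M(S')$ two maximal multiplices of $G$. If $M\cap M'\neq\emptyset$ then $M=M'$.
   Context: A graph $G=(V,E)$ has vertex set $V$ and edge set $E\subseteq V^2$; it is undirected if $E$ is irreflexive and symmetric. Implication classes: on $E$ define $(a,b)\Gamma(a',b')$ iff either $a=a'$ and $(b,b')\notin E$, or $b=b'$ and $(a,a')\notin E$; the classes of the transitive closure $\Gamma^*$ are the implication classes. For an implication class $A$, $A^{-1}=\{(b,a):(a,b)\in A\}$ and the color class is $\widehat A=A\cup A^{-1}$. A simplex of rank $r\ge1$ is a complete sub-graph $S=(V_S,E_S)$ of $G$ on $r+1$ vertices whose distinct undirected edges lie in distinct color classes; it is maximal if not properly contained in a larger simplex. The multiplex generated by $S$ is $M(S)=\bigcup\{\widehat A:\widehat A\text{ a color class},\ \widehat A\cap E_S\neq\emptyset\}$; it is maximal if $S$ is maximal. *)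

theory Defs
  imports Main
begin

definition undirected_graph :: "'a set \<Rightarrow> ('a \<times> 'a) set \<Rightarrow> bool" where
  "undirected_graph V E \<longleftrightarrow> E \<subseteq> V \<times> V \<and> irrefl E \<and> sym E"

definition Gamma :: "('a \<times> 'a) set \<Rightarrow> (('a \<times> 'a) \<times> ('a \<times> 'a)) set" where
  "Gamma E = {((a,b),(a',b')). (a,b) \<in> E \<and> (a',b') \<in> E \<and>
      ((a = a' \<and> (b,b') \<notin> E) \<or> (b = b' \<and> (a,a') \<notin> E))}"

definition impl_class :: "('a \<times> 'a) set \<Rightarrow> ('a \<times> 'a) \<Rightarrow> ('a \<times> 'a) set" where
  "impl_class E e = {f. (e, f) \<in> (Gamma E)\<^sup>+}"

definition implication_classes :: "('a \<times> 'a) set \<Rightarrow> ('a \<times> 'a) set set" where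
  "implication_classes E = {impl_class E e | e. e \<in> E}"

definition color_classes :: "('a \<times> 'a) set \<Rightarrow> ('a \<times> 'a) set set" where
  "color_classes E = {A \<union> A\<inverse> | A. A \<in> implication_classes E}"

definition complete_edges :: "'a set \<Rightarrow> ('a \<times> 'a) set" where
  "complete_edges VS = {(x,y). x \<in> VS \<and> y \<in> VS \<and> x \<noteq> y}"

text \<open>A simplex (of some rank r \<ge> 1), represented by its vertex set VS (r+1 vertices).\<close>
definition simplex :: "'a set \<Rightarrow> ('a \<times> 'a) set \<Rightarrow> 'a set \<Rightarrow> bool" where
  "simplex V E VS \<longleftrightarrow> finite VS \<and> card VS \<ge> 2 \<and> VS \<subseteq> V \<and> complete_edges VS \<subseteq> E \<and>
     (\<forall>C \<in> color_classes E. \<forall>e \<in> complete_edges VS. \<forall>f \<in> complete_edges VS.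
        e \<in> C \<and> f \<in> C \<longrightarrow> {fst e, snd e} = {fst f, snd f})"

definition maximal_simplex :: "'a set \<Rightarrow> ('a \<times> 'a) set \<Rightarrow> 'a set \<Rightarrow> bool" where
  "maximal_simplex V E VS \<longleftrightarrow> simplex V E VS \<and> \<not> (\<exists>VS'. simplex V E VS' \<and> VS \<subset> VS')"

definition multiplex :: "('a \<times> 'a) set \<Rightarrow> 'a set \<Rightarrow> ('a \<times> 'a) set" where
  "multiplex E VS = \<Union>{C \<in> color_classes E. C \<inter> complete_edges VS \<noteq> {}}"

end

theory Submission
  imports Defs
begin

locale ug =
  fixes V :: "'a set" and E :: "('a \<times> 'a) set"
  assumes ug: "undirected_graph V E"
begin

abbreviation "cls \<equiv> impl_class E"

definition mx :: "'a set \<Rightarrow> ('a \<times> 'a) set" where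
  "mx T = {f. \<exists>x\<in>T. \<exists>y\<in>T. x \<noteq> y \<and> f \<in> cls (x,y)}"

lemma E_sym: "(a,b) \<in> E \<Longrightarrow> (b,a) \<in> E"
  using ug unfolding undirected_graph_def sym_def by blast

lemma E_irr: "(a,a) \<notin> E"
  using ug unfolding undirected_graph_def irrefl_def by blast

lemma E_V: "(a,b) \<in> E \<Longrightarrow> a \<in> V \<and> b \<in> V"
  using ug unfolding undirected_graph_def by blast

lemma Gamma_sym: "(e,f) \<in> Gamma E \<Longrightarrow> (f,e) \<in> Gamma E"
  unfolding Gamma_def using E_sym by auto

lemma Gamma_refl: "e \<in> E \<Longrightarrow> (e,e) \<in> Gamma E"
  unfolding Gamma_def using E_irr by (cases e) auto

lemma Gamma_rev: "((a,b),(c,d)) \<in> Gamma E \<Longrightarrow> ((b,a),(d,c)) \<in> Gamma E"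
  unfolding Gamma_def using E_sym by auto

lemma Gamma_E: "(e,f) \<in> Gamma E \<Longrightarrow> f \<in> E"
  unfolding Gamma_def by auto

lemma cls_self: "e \<in> E \<Longrightarrow> e \<in> cls e"
  unfolding impl_class_def using Gamma_refl by blast

lemma cls_E: "f \<in> cls e \<Longrightarrow> f \<in> E"
  unfolding impl_class_def using Gamma_E by (metis mem_Collect_eq trancl.cases)

lemma cls_sym: "f \<in> cls e \<Longrightarrow> e \<in> cls f"
proof -
  have "sym (Gamma E)" using Gamma_sym unfolding sym_def by blast
  then have "sym ((Gamma E)\<^sup>+)" by (rule sym_trancl)
  then show "f \<in> cls e \<Longrightarrow> e \<in> cls f" unfolding impl_class_def sym_def by blast
qed

lemma cls_trans: "f \<in> cls e \<Longrightarrow> g \<in> cls f \<Longrightarrow> g \<in> cls e"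
  unfolding impl_class_def by (meson mem_Collect_eq trancl_trans)

lemma cls_eq: "f \<in> cls e \<Longrightarrow> cls f = cls e"
  using cls_trans cls_sym by blast

lemma cls_rev_aux: "(e,f) \<in> (Gamma E)\<^sup>+ \<Longrightarrow> (prod.swap e, prod.swap f) \<in> (Gamma E)\<^sup>+"
proof (induction rule: trancl_induct)
  case (base y)
  then show ?case using Gamma_rev by (metis prod.collapse swap_simp r_into_trancl)
next
  case (step y z)
  then show ?case using Gamma_rev by (metis prod.collapse swap_simp trancl.trancl_into_trancl)
qed

lemma cls_rev: "(c,d) \<in> cls (a,b) \<Longrightarrow> (d,c) \<in> cls (b,a)"
  unfolding impl_class_def using cls_rev_aux by fastforce

lemma col_mem: "e \<in> E \<Longrightarrow> cls e \<union> (cls e)\<inverse> \<in> color_classes E"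
proof -
  assume "e \<in> E"
  then have "cls e \<in> implication_classes E" unfolding implication_classes_def by blast
  then show ?thesis unfolding color_classes_def by blast
qed

lemma col_aux:
  assumes "(x,y) \<in> cls g \<or> (y,x) \<in> cls g" "(u,v) \<in> cls g \<or> (v,u) \<in> cls g"
  shows "(u,v) \<in> cls (x,y) \<or> (v,u) \<in> cls (x,y)"
proof -
  { assume a: "(x,y) \<in> cls g"
    then have "cls (x,y) = cls g" by (rule cls_eq)
    then have ?thesis using assms(2) by simp }
  moreover
  { assume a: "(y,x) \<in> cls g"
    then have c: "cls (y,x) = cls g" by (rule cls_eq)
    have ?thesis
    proof (cases "(u,v) \<in> cls g")
      case True
      then have "(u,v) \<in> cls (y,x)" using c by simp
      then show ?thesis using cls_rev by blast
    next
      case False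
      then have "(v,u) \<in> cls (y,x)" using c assms(2) by simp
      then show ?thesis using cls_rev by blast
    qed }
  ultimately show ?thesis using assms(1) by blast
qed

lemma simplex_iff: "simplex V E T \<longleftrightarrow> finite T \<and> card T \<ge> 2 \<and> T \<subseteq> V \<and>
   (\<forall>x\<in>T. \<forall>y\<in>T. x \<noteq> y \<longrightarrow> (x,y) \<in> E) \<and>
   (\<forall>x\<in>T. \<forall>y\<in>T. \<forall>u\<in>T. \<forall>v\<in>T. x \<noteq> y \<longrightarrow> u \<noteq> v \<longrightarrow> (u,v) \<in> cls (x,y) \<longrightarrow> {u,v} = {x,y})"
  (is "?L \<longleftrightarrow> ?R")
proof
  assume L: ?L
  have ce: "\<forall>x\<in>T. \<forall>y\<in>T. x \<noteq> y \<longrightarrow> (x,y) \<in> E"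
    using L unfolding simplex_def complete_edges_def by blast
  moreover have "\<forall>x\<in>T. \<forall>y\<in>T. \<forall>u\<in>T. \<forall>v\<in>T. x \<noteq> y \<longrightarrow> u \<noteq> v \<longrightarrow> (u,v) \<in> cls (x,y) \<longrightarrow> {u,v} = {x,y}"
  proof (intro ballI impI)
    fix x y u v assume xyuv: "x\<in>T" "y\<in>T" "u\<in>T" "v\<in>T" "x\<noteq>y" "u\<noteq>v" "(u,v) \<in> cls (x,y)"
    let ?C = "cls (x,y) \<union> (cls (x,y))\<inverse>"
    have "?C \<in> color_classes E"
      by (rule col_mem) (use ce xyuv in blast)
    moreover have "(x,y) \<in> ?C" using cls_self ce xyuv by blast
    moreover have "(u,v) \<in> ?C" using xyuv by blast
    moreover have "(x,y) \<in> complete_edges T" "(u,v) \<in> complete_edges T"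
      unfolding complete_edges_def using xyuv by auto
    moreover have H: "\<forall>C \<in> color_classes E. \<forall>e \<in> complete_edges T. \<forall>f \<in> complete_edges T.
        e \<in> C \<and> f \<in> C \<longrightarrow> {fst e, snd e} = {fst f, snd f}" using L unfolding simplex_def by blast
    ultimately have "{fst (x,y), snd (x,y)} = {fst (u,v), snd (u,v)}"
      using H[rule_format, of ?C "(x,y)" "(u,v)"] by simp
    then show "{u,v} = {x,y}" by simp
  qed
  ultimately show ?R using L unfolding simplex_def by (intro conjI) simp_all
next
  assume R: ?R
  have cond: "\<forall>x\<in>T. \<forall>y\<in>T. \<forall>u\<in>T. \<forall>v\<in>T. x \<noteq> y \<longrightarrow> u \<noteq> v \<longrightarrow> (u,v) \<in> cls (x,y) \<longrightarrow> {u,v} = {x,y}"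
    using R by (elim conjE) assumption
  have "complete_edges T \<subseteq> E" using R unfolding complete_edges_def by blast
  moreover have "\<forall>C \<in> color_classes E. \<forall>e \<in> complete_edges T. \<forall>f \<in> complete_edges T.
        e \<in> C \<and> f \<in> C \<longrightarrow> {fst e, snd e} = {fst f, snd f}"
  proof (intro ballI impI)
    fix C e f assume C: "C \<in> color_classes E" and e: "e \<in> complete_edges T"
      and f: "f \<in> complete_edges T" and ef: "e \<in> C \<and> f \<in> C"
    obtain g where C: "C = cls g \<union> (cls g)\<inverse>"
      using C unfolding color_classes_def implication_classes_def by blast
    obtain x y where e': "e = (x,y)" "x\<in>T" "y\<in>T" "x\<noteq>y" using e unfolding complete_edges_def by auto
    obtain u v where f': "f = (u,v)" "u\<in>T" "v\<in>T" "u\<noteq>v" using f unfolding complete_edges_def by auto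
    have "(u,v) \<in> cls (x,y) \<or> (v,u) \<in> cls (x,y)"
    proof -
      have "((x,y) \<in> cls g \<or> (y,x) \<in> cls g) \<and> ((u,v) \<in> cls g \<or> (v,u) \<in> cls g)"
        using ef C e' f' by auto
      then show ?thesis by (intro col_aux) auto
    qed
    then have "{u,v} = {x,y}"
    proof
      assume "(u,v) \<in> cls (x,y)" then show ?thesis using e' f' by (intro cond[rule_format]) auto
    next
      assume "(v,u) \<in> cls (x,y)" then have "{v,u} = {x,y}" using e' f' by (intro cond[rule_format]) auto
      then show ?thesis by (simp add: insert_commute)
    qed
    then show "{fst e, snd e} = {fst f, snd f}" using e' f' by simp
  qed
  ultimately show ?L using R unfolding simplex_def by (intro conjI) (simp only:)+
qed

lemma test_mx: "x \<in> T \<Longrightarrow> y \<in> T \<Longrightarrow> x \<noteq> y \<Longrightarrow> f \<in> cls (x,y) \<Longrightarrow> f \<in> mx T"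
  unfolding mx_def by blast

lemma multiplex_eq:
  assumes "\<forall>x\<in>T. \<forall>y\<in>T. x \<noteq> y \<longrightarrow> (x,y) \<in> E"
  shows "multiplex E T = mx T"
proof
  show "multiplex E T \<subseteq> mx T"
  proof
    fix f assume "f \<in> multiplex E T"
    then obtain C where C: "C \<in> color_classes E" "C \<inter> complete_edges T \<noteq> {}" "f \<in> C"
      unfolding multiplex_def by blast
    obtain g where g: "C = cls g \<union> (cls g)\<inverse>"
      using C unfolding color_classes_def implication_classes_def by blast
    obtain x y where xy: "(x,y) \<in> C" "x\<in>T" "y\<in>T" "x\<noteq>y" using C(2) unfolding complete_edges_def by auto
    have "f \<in> cls (x,y) \<or> f \<in> cls (y,x)"
    proof -
      obtain a b where f: "f = (a,b)" by (cases f)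
      have "((x,y) \<in> cls g \<or> (y,x) \<in> cls g) \<and> ((a,b) \<in> cls g \<or> (b,a) \<in> cls g)"
        using xy C g f by auto
      then have "(a,b) \<in> cls (x,y) \<or> (b,a) \<in> cls (x,y)" by (intro col_aux) auto
      then show ?thesis using f cls_rev[of b a x y] by blast
    qed
    then show "f \<in> mx T"
    proof
      assume "f \<in> cls (x,y)" then show ?thesis unfolding mx_def using xy by blast
    next
      assume "f \<in> cls (y,x)" then show ?thesis using test_mx[of y T x f] xy by auto
    qed
  qed
next
  show "mx T \<subseteq> multiplex E T"
  proof
    fix f assume "f \<in> mx T"
    then obtain x y where xy: "x\<in>T" "y\<in>T" "x\<noteq>y" "f \<in> cls (x,y)" unfolding mx_def by blast
    let ?C = "cls (x,y) \<union> (cls (x,y))\<inverse>"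
    have "?C \<in> color_classes E"
      by (rule col_mem) (use assms xy in blast)
    moreover have "(x,y) \<in> ?C \<inter> complete_edges T"
    proof -
      have "(x,y) \<in> E" using assms xy by blast
      then have "(x,y) \<in> cls (x,y)" by (rule cls_self)
      moreover have "(x,y) \<in> complete_edges T" using xy by (simp add: complete_edges_def)
      ultimately show ?thesis by blast
    qed
    ultimately have "?C \<in> {C \<in> color_classes E. C \<inter> complete_edges T \<noteq> {}}" by (simp only: mem_Collect_eq) blast
    moreover have "f \<in> ?C" using xy by blast
    ultimately show "f \<in> multiplex E T" unfolding multiplex_def by (rule UnionI)
  qed
qed

lemma triangle:
  assumes ab: "(a,b) \<in> E" and ca: "(c,a) \<in> E"
    and n1: "(b,c) \<notin> cls (b,a)" and n2: "(b,c) \<notin> cls (a,c)"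
    and bc': "(b',c') \<in> cls (b,c)"
  shows "(a,b') \<in> cls (a,b) \<and> (c',a) \<in> cls (c,a)"
proof -
  have "((b,c),(b',c')) \<in> (Gamma E)\<^sup>*" using bc' unfolding impl_class_def by auto
  then have "(a, fst (b',c')) \<in> cls (a,b) \<and> (snd (b',c'), a) \<in> cls (c,a)"
  proof (induction rule: rtrancl_induct)
    case base
    then show ?case using cls_self ab ca by auto
  next
    case (step f g)
    obtain b1 c1 where f: "f = (b1,c1)" by (cases f)
    obtain b2 c2 where g: "g = (b2,c2)" by (cases g)
    have hg: "g \<in> cls (b,c)" using step(1,2) unfolding impl_class_def
      using rtrancl_into_trancl1 by fastforce
    have IH1: "(a,b1) \<in> cls (a,b)" and IH2: "(c1,a) \<in> cls (c,a)" using step(3) f by auto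
    have G: "(b1,c1) \<in> E" "(b2,c2) \<in> E" "(b1 = b2 \<and> (c1,c2) \<notin> E) \<or> (c1 = c2 \<and> (b1,b2) \<notin> E)"
      using step(2) f g unfolding Gamma_def by auto
    have aE1: "(a,b1) \<in> E" using IH1 cls_E by blast
    have aE2: "(c1,a) \<in> E" using IH2 cls_E by blast
    show ?case
    proof (cases "b1 = b2 \<and> (c1,c2) \<notin> E")
      case True
      have "(a,c2) \<in> E"
      proof (rule ccontr)
        assume na: "(a,c2) \<notin> E"
        have "((b1,a),(b1,c2)) \<in> Gamma E"
          unfolding Gamma_def using E_sym[OF aE1] G True na by auto
        then have "(b1,c2) \<in> cls (b1,a)" unfolding impl_class_def by auto
        moreover have "(b1,a) \<in> cls (b,a)" using cls_rev[OF IH1] .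
        ultimately have "(b1,c2) \<in> cls (b,a)" using cls_trans by blast
        moreover have "(b1,c2) \<in> cls (b,c)" using hg g True by simp
        ultimately have "(b,c) \<in> cls (b,a)" using cls_sym cls_trans by blast
        then show False using n1 by simp
      qed
      have "((c1,a),(c2,a)) \<in> Gamma E"
        unfolding Gamma_def using aE2 E_sym[OF \<open>(a,c2) \<in> E\<close>] True by auto
      then have "(c2,a) \<in> cls (c1,a)" unfolding impl_class_def by auto
      then have "(c2,a) \<in> cls (c,a)" using IH2 cls_trans by blast
      then show ?thesis using IH1 True g by simp
    next
      case False
      then have F: "c1 = c2" "(b1,b2) \<notin> E" using G by auto
      have "(a,b2) \<in> E"
      proof (rule ccontr)
        assume na: "(a,b2) \<notin> E"
        have "((b2,c1),(a,c1)) \<in> Gamma E"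
          unfolding Gamma_def using E_sym[OF aE2] G F na E_sym[of b2 a] by auto
        then have "(a,c1) \<in> cls (b2,c1)" unfolding impl_class_def by auto
        moreover have "cls (b2,c1) = cls (b,c)" using hg g F cls_eq by simp
        ultimately have "(a,c1) \<in> cls (b,c)" by simp
        moreover have "(a,c1) \<in> cls (a,c)" using cls_rev[OF IH2] .
        ultimately have "(b,c) \<in> cls (a,c)" using cls_sym cls_trans by blast
        then show False using n2 by simp
      qed
      have "((a,b1),(a,b2)) \<in> Gamma E"
        unfolding Gamma_def using aE1 \<open>(a,b2) \<in> E\<close> F by auto
      then have "(a,b2) \<in> cls (a,b1)" unfolding impl_class_def by auto
      then have "(a,b2) \<in> cls (a,b)" using IH1 cls_trans by blast
      then show ?thesis using IH2 F g by simp
    qed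
  qed
  then show ?thesis by simp
qed

lemma simplex_E: "simplex V E T \<Longrightarrow> x \<in> T \<Longrightarrow> y \<in> T \<Longrightarrow> x \<noteq> y \<Longrightarrow> (x,y) \<in> E"
  unfolding simplex_iff by blast

lemma simplex_cond: assumes "simplex V E T" "x \<in> T" "y \<in> T" "u \<in> T" "v \<in> T"
  "x \<noteq> y" "u \<noteq> v" "(u,v) \<in> cls (x,y)" shows "{u,v} = {x,y}"
proof -
  have H: "\<forall>x\<in>T. \<forall>y\<in>T. \<forall>u\<in>T. \<forall>v\<in>T. x \<noteq> y \<longrightarrow> u \<noteq> v \<longrightarrow> (u,v) \<in> cls (x,y) \<longrightarrow> {u,v} = {x,y}"
    using assms(1) unfolding simplex_iff by (elim conjE) assumption
  show ?thesis by (rule H[rule_format]) (use assms in auto)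
qed

lemma simplex_fin: "simplex V E T \<Longrightarrow> finite T \<and> card T \<ge> 2"
  unfolding simplex_def by blast

lemma swap_pt:
  assumes S: "simplex V E T" and pq: "p \<in> T" "q \<in> T" "p \<noteq> q"
    and y: "(y0,y1) \<in> cls (p,q)" and z: "z \<in> T" "z \<noteq> p" "z \<noteq> q"
  shows "(z,y0) \<in> cls (z,p) \<and> (y1,z) \<in> cls (q,z)"
proof -
  have "(z,p) \<in> E" "(q,z) \<in> E" using simplex_E[OF S] pq z by auto
  moreover have "(p,q) \<notin> cls (p,z)"
  proof
    assume "(p,q) \<in> cls (p,z)"
    then have "{p,q} = {p,z}" using simplex_cond[OF S, of p z p q] pq z by blast
    then show False using pq z by (metis doubleton_eq_iff)
  qed
  moreover have "(p,q) \<notin> cls (z,q)"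
  proof
    assume "(p,q) \<in> cls (z,q)"
    then have "{p,q} = {z,q}" using simplex_cond[OF S, of z q p q] pq z by blast
    then show False using pq z by (metis doubleton_eq_iff)
  qed
  ultimately show ?thesis using triangle y by blast
qed

lemma sim_simplex:
  assumes S: "simplex V E T" and inj: "inj_on \<phi> T1" and im: "\<phi> ` T1 = T"
    and rel: "\<forall>u\<in>T1. \<forall>v\<in>T1. u \<noteq> v \<longrightarrow> (u,v) \<in> cls (\<phi> u, \<phi> v)"
  shows "simplex V E T1 \<and> mx T1 = mx T"
proof -
  have relc: "\<And>u v. u \<in> T1 \<Longrightarrow> v \<in> T1 \<Longrightarrow> u \<noteq> v \<Longrightarrow> cls (u,v) = cls (\<phi> u, \<phi> v)"
  proof -
    fix u v assume "u \<in> T1" "v \<in> T1" "u \<noteq> v"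
    then have "(u,v) \<in> cls (\<phi> u, \<phi> v)" using rel by blast
    then show "cls (u,v) = cls (\<phi> u, \<phi> v)" by (rule cls_eq)
  qed
  have injd: "\<And>u v. u \<in> T1 \<Longrightarrow> v \<in> T1 \<Longrightarrow> u \<noteq> v \<Longrightarrow> \<phi> u \<noteq> \<phi> v"
    using inj unfolding inj_on_def by blast
  have "finite (\<phi> ` T1)" using im simplex_fin[OF S] by simp
  then have fin: "finite T1" using finite_imageD inj by blast
  have card: "card T1 = card T" using card_image[OF inj] im by simp
  have ce: "\<forall>x\<in>T1. \<forall>y\<in>T1. x \<noteq> y \<longrightarrow> (x,y) \<in> E" using rel cls_E by blast
  have c2: "card T1 \<ge> 2" using card simplex_fin[OF S] by simp
  have sub: "T1 \<subseteq> V"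
  proof
    fix u assume u: "u \<in> T1"
    have "\<not> T1 \<subseteq> {u}"
    proof
      assume "T1 \<subseteq> {u}"
      then have "card T1 \<le> card {u}" by (intro card_mono) auto
      then show False using c2 by simp
    qed
    then obtain v where "v \<in> T1" "v \<noteq> u" by blast
    then show "u \<in> V" using ce u E_V by blast
  qed
  have cond: "\<forall>x\<in>T1. \<forall>y\<in>T1. \<forall>u\<in>T1. \<forall>v\<in>T1. x \<noteq> y \<longrightarrow> u \<noteq> v \<longrightarrow> (u,v) \<in> cls (x,y) \<longrightarrow> {u,v} = {x,y}"
  proof (intro ballI impI)
    fix x y u v assume h: "x\<in>T1" "y\<in>T1" "u\<in>T1" "v\<in>T1" "x\<noteq>y" "u\<noteq>v" "(u,v) \<in> cls (x,y)"
    have "(u,v) \<in> cls (\<phi> x, \<phi> y)" using h relc[of x y] by simp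
    moreover have "cls (u,v) = cls (\<phi> u, \<phi> v)" using h relc[of u v] by simp
    ultimately have "(\<phi> u, \<phi> v) \<in> cls (\<phi> x, \<phi> y)" using cls_sym cls_trans cls_self
      by (metis cls_E)
    moreover have "\<phi> x \<in> T" "\<phi> y \<in> T" "\<phi> u \<in> T" "\<phi> v \<in> T" using h im by auto
    moreover have "\<phi> x \<noteq> \<phi> y" "\<phi> u \<noteq> \<phi> v" using injd h by auto
    ultimately have "{\<phi> u, \<phi> v} = {\<phi> x, \<phi> y}" using simplex_cond[OF S] by blast
    then have e: "\<phi> ` {u,v} = \<phi> ` {x,y}" by simp
    have "{u,v} \<subseteq> T1" "{x,y} \<subseteq> T1" using h by auto
    from inj_on_image_eq_iff[OF inj this] e show "{u,v} = {x,y}" by simp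
  qed
  have "simplex V E T1" unfolding simplex_iff using fin c2 sub ce cond by (intro conjI)
  moreover have "mx T1 = mx T"
  proof
    show "mx T1 \<subseteq> mx T"
    proof
      fix f assume "f \<in> mx T1"
      then obtain u v where h: "u\<in>T1" "v\<in>T1" "u\<noteq>v" "f \<in> cls (u,v)" unfolding mx_def by blast
      have "f \<in> cls (\<phi> u, \<phi> v)" using h relc[of u v] by simp
      moreover have "\<phi> u \<noteq> \<phi> v" using injd h by blast
      moreover have "\<phi> u \<in> T" "\<phi> v \<in> T" using h im by auto
      ultimately show "f \<in> mx T" using test_mx[of "\<phi> u" T "\<phi> v" f] by blast
    qed
  next
    show "mx T \<subseteq> mx T1"
    proof
      fix f assume "f \<in> mx T"
      then obtain x y where h: "x\<in>T" "y\<in>T" "x\<noteq>y" "f \<in> cls (x,y)" unfolding mx_def by blast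
      obtain u v where uv: "u \<in> T1" "v \<in> T1" "x = \<phi> u" "y = \<phi> v" using h im by blast
      have "u \<noteq> v" using uv h by blast
      then have "f \<in> cls (u,v)" using relc[of u v] uv h by simp
      then show "f \<in> mx T1" using test_mx[of u T1 v f] uv \<open>u \<noteq> v\<close> by blast
    qed
  qed
  ultimately show ?thesis by blast
qed

lemma swap_simplex:
  assumes S: "simplex V E T" and pq: "p \<in> T" "q \<in> T" "p \<noteq> q"
    and y: "(y0,y1) \<in> cls (p,q)"
  shows "simplex V E (T - {p,q} \<union> {y0,y1}) \<and> mx (T - {p,q} \<union> {y0,y1}) = mx T
     \<and> y0 \<noteq> y1 \<and> y0 \<notin> T - {p,q} \<and> y1 \<notin> T - {p,q}"
proof -
  have yE: "(y0,y1) \<in> E" using y cls_E by blast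
  then have y01: "y0 \<noteq> y1" using E_irr by blast
  have P: "\<And>z. z \<in> T - {p,q} \<Longrightarrow> (z,y0) \<in> cls (z,p) \<and> (y1,z) \<in> cls (q,z)"
    using swap_pt[OF S pq y] by blast
  have ny: "\<And>z. z \<in> T - {p,q} \<Longrightarrow> z \<noteq> y0 \<and> z \<noteq> y1"
    using P cls_E E_irr by blast
  define \<phi> where "\<phi> = (\<lambda>x. if x = y0 then p else if x = y1 then q else x)"
  let ?T1 = "T - {p,q} \<union> {y0,y1}"
  have inj: "inj_on \<phi> ?T1"
    unfolding inj_on_def \<phi>_def using ny y01 pq by auto
  have im: "\<phi> ` ?T1 = T"
  proof
    show "\<phi> ` ?T1 \<subseteq> T" unfolding \<phi>_def using pq ny by auto
    show "T \<subseteq> \<phi> ` ?T1"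
    proof
      fix t assume t: "t \<in> T"
      show "t \<in> \<phi> ` ?T1"
      proof (cases "t = p \<or> t = q")
        case True
        then show ?thesis unfolding \<phi>_def using y01 by (auto intro: image_eqI[of _ _ y0] image_eqI[of _ _ y1])
      next
        case False
        then have "\<phi> t = t" "t \<in> ?T1" unfolding \<phi>_def using ny t by auto
        then show ?thesis by (metis imageI)
      qed
    qed
  qed
  have f0: "\<phi> y0 = p" and f1: "\<phi> y1 = q" unfolding \<phi>_def using y01 by auto
  have fz: "\<And>z. z \<in> T - {p,q} \<Longrightarrow> \<phi> z = z" unfolding \<phi>_def using ny by auto
  have rel: "\<forall>u\<in>?T1. \<forall>v\<in>?T1. u \<noteq> v \<longrightarrow> (u,v) \<in> cls (\<phi> u, \<phi> v)"
  proof (intro ballI impI)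
    fix u v assume u: "u \<in> ?T1" and v: "v \<in> ?T1" and uv: "u \<noteq> v"
      have yr: "(y1,y0) \<in> cls (q,p)" using cls_rev[OF y] .
    show "(u,v) \<in> cls (\<phi> u, \<phi> v)"
    proof (cases "u \<in> {y0,y1}")
      case True
      show ?thesis
      proof (cases "v \<in> {y0,y1}")
        case True
        then have "(u = y0 \<and> v = y1) \<or> (u = y1 \<and> v = y0)" using \<open>u \<in> {y0,y1}\<close> uv by blast
        then show ?thesis using y yr f0 f1 by auto
      next
        case False
        then have v': "v \<in> T - {p,q}" using v by auto
        have "(v,y0) \<in> cls (v,p)" "(y1,v) \<in> cls (q,v)" using P[OF v'] by auto
        moreover have "(y0,v) \<in> cls (p,v)" using cls_rev[OF \<open>(v,y0) \<in> cls (v,p)\<close>] .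
        ultimately show ?thesis using \<open>u \<in> {y0,y1}\<close> f0 f1 fz[OF v'] by auto
      qed
    next
      case False
      then have u': "u \<in> T - {p,q}" using u by auto
      show ?thesis
      proof (cases "v \<in> {y0,y1}")
        case True
        have "(u,y0) \<in> cls (u,p)" "(y1,u) \<in> cls (q,u)" using P[OF u'] by auto
        moreover have "(u,y1) \<in> cls (u,q)" using cls_rev[OF \<open>(y1,u) \<in> cls (q,u)\<close>] .
        ultimately show ?thesis using True f0 f1 fz[OF u'] by auto
      next
        case False
        then have v': "v \<in> T - {p,q}" using v by auto
        have "(u,v) \<in> E" using simplex_E[OF S] u' v' uv by blast
        then show ?thesis using fz[OF u'] fz[OF v'] cls_self by simp
      qed
    qed
  qed
  show ?thesis using sim_simplex[OF S inj im rel] y01 ny by blast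
qed

lemma swap_max:
  assumes S: "maximal_simplex V E T" and pq: "p \<in> T" "q \<in> T" "p \<noteq> q"
    and y: "(y0,y1) \<in> cls (p,q)"
  shows "maximal_simplex V E (T - {p,q} \<union> {y0,y1}) \<and> mx (T - {p,q} \<union> {y0,y1}) = mx T"
proof -
  have ST: "simplex V E T" using S unfolding maximal_simplex_def by blast
  note A = swap_simplex[OF ST pq y]
  let ?T1 = "T - {p,q} \<union> {y0,y1}"
  have "\<not> (\<exists>U. simplex V E U \<and> ?T1 \<subset> U)"
  proof
    assume "\<exists>U. simplex V E U \<and> ?T1 \<subset> U"
    then obtain U where U: "simplex V E U" "?T1 \<subset> U" by blast
    have yU: "y0 \<in> U" "y1 \<in> U" "y0 \<noteq> y1" using U A by auto
    have py: "(p,q) \<in> cls (y0,y1)" using y cls_sym by blast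
    note B = swap_simplex[OF U(1) yU py]
    let ?U1 = "U - {y0,y1} \<union> {p,q}"
    have "T \<subseteq> ?U1" using A U by blast
    moreover obtain u where u: "u \<in> U" "u \<notin> ?T1" using U by blast
    moreover have "u \<in> ?U1" "u \<notin> T" using u B by auto
    ultimately have "T \<subset> ?U1" by blast
    then show False using S B unfolding maximal_simplex_def by blast
  qed
  then show ?thesis using A unfolding maximal_simplex_def by blast
qed

lemma main:
  assumes MS: "maximal_simplex V E S" and MS': "maximal_simplex V E S'"
    and ne: "mx S \<inter> mx S' \<noteq> {}"
  shows "mx S = mx S'"
proof -
  have SS: "simplex V E S" using MS unfolding maximal_simplex_def by blast
  have SS': "simplex V E S'" using MS' unfolding maximal_simplex_def by blast
  have finS': "finite S'" using simplex_fin[OF SS'] by blast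
  obtain f where f1: "f \<in> mx S" and f2: "f \<in> mx S'" using ne by blast
  obtain x0 x1 where x: "x0 \<in> S" "x1 \<in> S" "x0 \<noteq> x1" "f \<in> cls (x0,x1)"
    using f1 unfolding mx_def by blast
  obtain u0 u1 where u: "u0 \<in> S'" "u1 \<in> S'" "u0 \<noteq> u1" "f \<in> cls (u0,u1)"
    using f2 unfolding mx_def by blast
  have "(u0,u1) \<in> cls f" using cls_sym[OF u(4)] .
  then have ux: "(u0,u1) \<in> cls (x0,x1)" using cls_trans[OF x(4)] by blast
  define T0 where "T0 = S - {x0,x1} \<union> {u0,u1}"
  have T0: "maximal_simplex V E T0" "mx T0 = mx S"
    using swap_max[OF MS x(1-3) ux] unfolding T0_def by blast+
  have "{u0,u1} \<subseteq> T0 \<inter> S'" using u unfolding T0_def by blast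
  then have "card {u0,u1} \<le> card (T0 \<inter> S')" using finS' by (intro card_mono) auto
  then have T0c: "2 \<le> card (T0 \<inter> S')" using u(3) by simp
  define P where "P = (\<lambda>T. maximal_simplex V E T \<and> mx T = mx S \<and> 2 \<le> card (T \<inter> S'))"
  have PT0: "P T0" unfolding P_def using T0 T0c by blast
  have bnd: "\<forall>T. P T \<longrightarrow> card (T \<inter> S') < card S' + 1"
  proof (intro allI impI)
    fix T
    have "card (T \<inter> S') \<le> card S'" using finS' by (intro card_mono) auto
    then show "card (T \<inter> S') < card S' + 1" by simp
  qed
  obtain T where PT: "P T" and best: "\<forall>T'. P T' \<longrightarrow> card (T' \<inter> S') \<le> card (T \<inter> S')"
    using ex_has_greatest_nat[of P T0 "\<lambda>T. card (T \<inter> S')" "card S' + 1", OF PT0 bnd] by blast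
  have MT: "maximal_simplex V E T" and mxT: "mx T = mx S" and Kc: "2 \<le> card (T \<inter> S')"
    using PT unfolding P_def by blast+
  have ST: "simplex V E T" using MT unfolding maximal_simplex_def by blast
  have finT: "finite T" using simplex_fin[OF ST] by blast
  define K where "K = T \<inter> S'"
  have finK: "finite K" unfolding K_def using finT by blast
  have Kc2: "2 \<le> card K" using Kc unfolding K_def .
  have K2: "\<And>a. \<exists>t\<in>K. t \<noteq> a"
  proof -
    fix a
    show "\<exists>t\<in>K. t \<noteq> a"
    proof (rule ccontr)
      assume "\<not> (\<exists>t\<in>K. t \<noteq> a)"
      then have "K \<subseteq> {a}" by blast
      then have "card K \<le> card {a}" by (intro card_mono) auto
      then show False using Kc2 by simp
    qed
  qed
  have sub: "S' \<subseteq> T"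
  proof (rule ccontr)
    assume "\<not> S' \<subseteq> T"
    then obtain w where w: "w \<in> S'" "w \<notin> T" by blast
    show False
    proof (cases "\<exists>z\<in>T. (z,w) \<in> E \<and> (z,w) \<in> mx T")
      case True
      then obtain z where z: "z \<in> T" "(z,w) \<in> E" "(z,w) \<in> mx T" by blast
      then obtain x y where xy: "x \<in> T" "y \<in> T" "x \<noteq> y" "(z,w) \<in> cls (x,y)"
        unfolding mx_def by blast
      have Pt: "\<And>t. t \<in> T - {x,y} \<Longrightarrow> (t,z) \<in> cls (t,x) \<and> (w,t) \<in> cls (y,t)"
        using swap_pt[OF ST xy(1-4)] by blast
      have wxy: "w \<noteq> x" "w \<noteq> y" using w xy by auto
      have zxy: "z = x \<or> z = y"
      proof (rule ccontr)
        assume "\<not> (z = x \<or> z = y)"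
        then have "(z,z) \<in> cls (z,x)" using Pt z(1) by blast
        then show False using cls_E E_irr by blast
      qed
      show False
      proof (cases "z = x")
        case False
        then have zy: "z = y" using zxy by blast
        have Tsub: "T \<subseteq> {x,y}"
        proof
          fix t assume t: "t \<in> T"
          show "t \<in> {x,y}"
          proof (rule ccontr)
            assume nt: "t \<notin> {x,y}"
            then have "(t,y) \<in> cls (t,x)" using Pt t zy by blast
            moreover have "t \<noteq> x" "t \<noteq> y" using nt by auto
            ultimately have "{t,y} = {t,x}" using simplex_cond[OF ST, of t x t y] t xy by blast
            then show False using xy(3) \<open>t \<noteq> x\<close> \<open>t \<noteq> y\<close> by (simp add: doubleton_eq_iff)
          qed
        qed
        have "x \<in> S'"
        proof (rule ccontr)
          assume "x \<notin> S'"
          then have "K \<subseteq> {y}" using Tsub unfolding K_def by blast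
          then show False using K2[of y] by blast
        qed
        moreover have "y \<in> S'"
        proof (rule ccontr)
          assume "y \<notin> S'"
          then have "K \<subseteq> {x}" using Tsub unfolding K_def by blast
          then show False using K2[of x] by blast
        qed
        moreover have "(y,w) \<in> cls (x,y)" using xy zy by simp
        ultimately have "{y,w} = {x,y}" using simplex_cond[OF SS', of x y y w] w xy wxy by blast
        then show False using wxy by (simp add: doubleton_eq_iff)
      next
        case True
        define T1 where "T1 = T - {x,y} \<union> {x,w}"
        have T1: "maximal_simplex V E T1" "mx T1 = mx T"
          using swap_max[OF MT xy(1-3)] xy(4) True unfolding T1_def by blast+
        have yS': "y \<notin> S'"
        proof
          assume yS: "y \<in> S'"
          obtain t where t: "t \<in> K" "t \<noteq> y" using K2[of y] by blast
          show False
          proof (cases "t = x")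
            case True
            then have "x \<in> S'" using t unfolding K_def by blast
            moreover have "(x,w) \<in> cls (x,y)" using xy \<open>z = x\<close> by simp
            ultimately have "{x,w} = {x,y}" using simplex_cond[OF SS', of x y x w] w xy wxy yS by blast
            then show False using wxy by (simp add: doubleton_eq_iff)
          next
            case False
            then have tT: "t \<in> T - {x,y}" "t \<in> S'" using t unfolding K_def by auto
            then have "(w,t) \<in> cls (y,t)" using Pt by blast
            moreover have "w \<noteq> t" using tT w by blast
            ultimately have "{w,t} = {y,t}" using simplex_cond[OF SS', of y t w t] w tT yS t(2) by blast
            then show False using wxy \<open>w \<noteq> t\<close> by (simp add: doubleton_eq_iff)
          qed
        qed
        have "insert w K \<subseteq> T1 \<inter> S'" using yS' w unfolding T1_def K_def by blast
        moreover have "finite (T1 \<inter> S')" using finS' by blast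
        ultimately have "card (insert w K) \<le> card (T1 \<inter> S')" by (intro card_mono)
        moreover have "card (insert w K) = Suc (card K)" using finK w unfolding K_def by simp
        ultimately have big: "Suc (card K) \<le> card (T1 \<inter> S')" by simp
        then have "P T1" unfolding P_def using T1 mxT Kc2 by simp
        then have "card (T1 \<inter> S') \<le> card K" using best unfolding K_def by blast
        then show False using big by simp
      qed
    next
      case False
      then have B: "\<And>z. z \<in> T \<Longrightarrow> (z,w) \<in> E \<Longrightarrow> (z,w) \<notin> mx T" by blast
      obtain t0 where t0: "t0 \<in> K" using K2 by blast
      have t0': "t0 \<in> T" "t0 \<in> S'" using t0 unfolding K_def by auto
      have t0w: "t0 \<noteq> w" using t0' w by blast
      have B1: "\<And>z. z \<in> T \<Longrightarrow> (z,w) \<in> E"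
      proof (rule ccontr)
        fix z assume zT: "z \<in> T" and nz: "(z,w) \<notin> E"
        have "z \<noteq> t0" using nz simplex_E[OF SS' t0'(2) w(1) t0w] by blast
        have "(t0,w) \<in> E" using simplex_E[OF SS' t0'(2) w(1) t0w] .
        moreover have "(t0,z) \<in> E" using simplex_E[OF ST t0'(1) zT] \<open>z \<noteq> t0\<close> by blast
        moreover have "(w,z) \<notin> E" using nz E_sym[of w z] by blast
        ultimately have "((t0,w),(t0,z)) \<in> Gamma E" unfolding Gamma_def by blast
        then have "(t0,z) \<in> cls (t0,w)" unfolding impl_class_def by blast
        then have "(t0,w) \<in> cls (t0,z)" by (rule cls_sym)
        then have "(t0,w) \<in> mx T" using test_mx[of t0 T z] t0'(1) zT \<open>z \<noteq> t0\<close> by blast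
        then show False using B[OF t0'(1)] \<open>(t0,w) \<in> E\<close> by blast
      qed
      have tw: "\<And>t. t \<in> K \<Longrightarrow> (t,w) \<in> E" "\<And>t. t \<in> K \<Longrightarrow> t \<noteq> w"
        using B1 w unfolding K_def by auto
      \<comment> \<open>two edges from w to distinct vertices of T never share a colour\<close>
      have core: "\<And>z z'. z \<in> T \<Longrightarrow> z' \<in> T \<Longrightarrow> z \<noteq> z' \<Longrightarrow> z \<notin> S' \<Longrightarrow>
                  (w,z') \<in> cls (w,z) \<or> (z',w) \<in> cls (w,z) \<Longrightarrow> False"
      proof -
        fix z z' assume zT: "z \<in> T" and z'T: "z' \<in> T" and zz: "z \<noteq> z'" and zS: "z \<notin> S'"
          and sc: "(w,z') \<in> cls (w,z) \<or> (z',w) \<in> cls (w,z)"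
        have wz: "(w,z) \<in> E" using E_sym[OF B1[OF zT]] .
        have samecol: "\<And>a. a \<in> K \<Longrightarrow> (w,a) \<in> cls (w,z) \<or> (a,w) \<in> cls (w,z)"
          if "\<not> (\<exists>t\<in>K. \<not> ((w,t) \<in> cls (w,z) \<or> (w,t) \<in> cls (z,w)))"
        proof -
          fix a assume "a \<in> K"
          then have "(w,a) \<in> cls (w,z) \<or> (w,a) \<in> cls (z,w)" using that by blast
          then show "(w,a) \<in> cls (w,z) \<or> (a,w) \<in> cls (w,z)" using cls_rev[of w a z w] by blast
        qed
        have "\<exists>t\<in>K. \<not> ((w,t) \<in> cls (w,z) \<or> (w,t) \<in> cls (z,w))"
        proof (rule ccontr)
          assume nn: "\<not> (\<exists>t\<in>K. \<not> ((w,t) \<in> cls (w,z) \<or> (w,t) \<in> cls (z,w)))"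
          obtain t1 where t1: "t1 \<in> K" using K2 by blast
          obtain t2 where t2: "t2 \<in> K" "t2 \<noteq> t1" using K2[of t1] by blast
          have "(w,t1) \<in> cls (w,z) \<or> (t1,w) \<in> cls (w,z)" using samecol[OF nn t1] .
          moreover have "(w,t2) \<in> cls (w,z) \<or> (t2,w) \<in> cls (w,z)" using samecol[OF nn t2(1)] .
          ultimately have "(w,t2) \<in> cls (w,t1) \<or> (t2,w) \<in> cls (w,t1)" by (rule col_aux)
          moreover have "t1 \<in> S'" "t2 \<in> S'" "t1 \<noteq> w" "t2 \<noteq> w" using t1 t2 tw unfolding K_def by auto
          ultimately have "{w,t2} = {w,t1} \<or> {t2,w} = {w,t1}"
            using simplex_cond[OF SS', of w t1 w t2] simplex_cond[OF SS', of w t1 t2 w] w by blast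
          then show False using t2(2) by (auto simp: doubleton_eq_iff)
        qed
        then obtain t where t: "t \<in> K" and tn: "\<not> ((w,t) \<in> cls (w,z) \<or> (w,t) \<in> cls (z,w))" by blast
        have tT: "t \<in> T" and tS: "t \<in> S'" using t unfolding K_def by auto
        have tz: "t \<noteq> z" using tS zS by blast
        have twE: "(t,w) \<in> E" using tw(1)[OF t] .
        have ztE: "(z,t) \<in> E" using simplex_E[OF ST zT tT] tz by blast
        have n1: "(w,z) \<notin> cls (w,t)"
        proof
          assume "(w,z) \<in> cls (w,t)"
          then have "(w,t) \<in> cls (w,z)" by (rule cls_sym)
          then show False using tn by blast
        qed
        have n2: "(w,z) \<notin> cls (t,z)"
        proof
          assume "(w,z) \<in> cls (t,z)"
          then have "(z,w) \<in> cls (z,t)" by (rule cls_rev)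
          then have "(z,w) \<in> mx T" using test_mx[of z T t] zT tT tz by blast
          then show False using B[OF zT B1[OF zT]] by blast
        qed
        note TR = triangle[OF twE ztE n1 n2]
        from sc show False
        proof
          assume "(w,z') \<in> cls (w,z)"
          then have h: "(z',t) \<in> cls (z,t)" using TR by blast
          then have "z' \<noteq> t" using cls_E E_irr by blast
          then have "{z',t} = {z,t}" using simplex_cond[OF ST, of z t z' t] h zT tT z'T tz by blast
          then show False using zz tz by (auto simp: doubleton_eq_iff)
        next
          assume "(z',w) \<in> cls (w,z)"
          then have h: "(t,z') \<in> cls (t,w)" using TR by blast
          then have "t \<noteq> z'" using cls_E E_irr by blast
          have "(t,w) \<in> cls (t,z')" using cls_sym[OF h] .
          then have "(t,w) \<in> mx T" using test_mx[of t T z'] tT z'T \<open>t \<noteq> z'\<close> by blast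
          then show False using B[OF tT twE] by blast
        qed
      qed
      have core2: "\<And>z z'. z \<in> T \<Longrightarrow> z' \<in> T \<Longrightarrow> z \<noteq> z' \<Longrightarrow>
                  (w,z') \<in> cls (w,z) \<or> (z',w) \<in> cls (w,z) \<Longrightarrow> False"
      proof -
        fix z z' assume zT: "z \<in> T" and z'T: "z' \<in> T" and zz: "z \<noteq> z'"
          and sc: "(w,z') \<in> cls (w,z) \<or> (z',w) \<in> cls (w,z)"
        have sc': "(w,z) \<in> cls (w,z') \<or> (z,w) \<in> cls (w,z')"
          using sc
        proof
          assume "(w,z') \<in> cls (w,z)" then show ?thesis using cls_sym by blast
        next
          assume "(z',w) \<in> cls (w,z)"
          then have "(w,z) \<in> cls (z',w)" by (rule cls_sym)
          then have "(z,w) \<in> cls (w,z')" by (rule cls_rev)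
          then show ?thesis by blast
        qed
        show False
        proof (cases "z \<in> S'")
          case False
          then show False using core[OF zT z'T zz _ sc] by blast
        next
          case True
          show False
          proof (cases "z' \<in> S'")
            case False
            then show False using core[OF z'T zT zz[symmetric] _ sc'] by blast
          next
            case True
            have "w \<noteq> z" "w \<noteq> z'" using w zT z'T by auto
            then have "{w,z'} = {w,z} \<or> {z',w} = {w,z}"
              using sc simplex_cond[OF SS', of w z w z'] simplex_cond[OF SS', of w z z' w]
                w \<open>z \<in> S'\<close> True by blast
            then show False using zz by (auto simp: doubleton_eq_iff)
          qed
        qed
      qed
      let ?W = "insert w T"
      have condW: "\<forall>x\<in>?W. \<forall>y\<in>?W. \<forall>u\<in>?W. \<forall>v\<in>?W. x \<noteq> y \<longrightarrow> u \<noteq> v \<longrightarrow> (u,v) \<in> cls (x,y) \<longrightarrow> {u,v} = {x,y}"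
      proof (intro ballI impI)
        fix x y u v assume h: "x \<in> ?W" "y \<in> ?W" "u \<in> ?W" "v \<in> ?W" "x \<noteq> y" "u \<noteq> v" "(u,v) \<in> cls (x,y)"
        show "{u,v} = {x,y}"
        proof (rule ccontr)
          assume neq: "{u,v} \<noteq> {x,y}"
          have mxw: "\<And>a b. a \<in> T \<Longrightarrow> b \<in> T \<Longrightarrow> a \<noteq> b \<Longrightarrow> (w,c) \<in> cls (a,b) \<Longrightarrow> c \<in> T \<Longrightarrow> False" for c
          proof -
            fix a b assume ab: "a \<in> T" "b \<in> T" "a \<noteq> b" "(w,c) \<in> cls (a,b)" "c \<in> T"
            have "(c,w) \<in> cls (b,a)" using cls_rev[OF ab(4)] .
            then have "(c,w) \<in> mx T" using test_mx[of b T a] ab by blast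
            then show False using B[OF ab(5) B1[OF ab(5)]] by blast
          qed
          have mxw2: "\<And>a b. a \<in> T \<Longrightarrow> b \<in> T \<Longrightarrow> a \<noteq> b \<Longrightarrow> (c,w) \<in> cls (a,b) \<Longrightarrow> c \<in> T \<Longrightarrow> False" for c
          proof -
            fix a b assume ab: "a \<in> T" "b \<in> T" "a \<noteq> b" "(c,w) \<in> cls (a,b)" "c \<in> T"
            have "(c,w) \<in> mx T" using test_mx[of a T b] ab by blast
            then show False using B[OF ab(5) B1[OF ab(5)]] by blast
          qed
          show False
          proof (cases "w \<in> {x,y}")
            case False
            then have xyT: "x \<in> T" "y \<in> T" using h by auto
            show False
            proof (cases "w \<in> {u,v}")
              case False
              then have "u \<in> T" "v \<in> T" using h by auto
              then have "{u,v} = {x,y}" using simplex_cond[OF ST xyT] h by blast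
              then show False using neq by blast
            next
              case True
              then have "u = w \<or> v = w" by blast
              then show False
              proof
                assume uw: "u = w"
                then have "v \<in> T" using h by auto
                then show False using mxw[OF xyT h(5)] h uw by blast
              next
                assume vw: "v = w"
                then have "u \<in> T" using h by auto
                then show False using mxw2[OF xyT h(5)] h vw by blast
              qed
            qed
          next
            case True
            show False
            proof (cases "w \<in> {u,v}")
              case False
              then have uvT: "u \<in> T" "v \<in> T" using h by auto
              have "(x,y) \<in> cls (u,v)" using cls_sym[OF h(7)] .
              moreover have "x = w \<or> y = w" using True by blast
              moreover have "x \<in> T \<or> x = w" "y \<in> T \<or> y = w" using h by auto
              ultimately show False using mxw[OF uvT h(6)] mxw2[OF uvT h(6)] h(5) by blast
            next
              case True2: True
              have xw: "x = w \<or> y = w" using True by blast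
              have uw: "u = w \<or> v = w" using True2 by blast
              show False
              proof (cases "x = w")
                case xw1: True
                then have yT: "y \<in> T" "y \<noteq> w" using h by auto
                show False
                proof (cases "u = w")
                  case True
                  then have vT: "v \<in> T" "v \<noteq> y" using h neq xw1 by auto
                  have "(w,v) \<in> cls (w,y)" using h True xw1 by simp
                  then show False using core2[OF yT(1) vT(1) vT(2)[symmetric]] by blast
                next
                  case False
                  then have vw: "v = w" using uw by blast
                  then have uT: "u \<in> T" "u \<noteq> y" using h neq xw1 False by auto
                  have "(u,w) \<in> cls (w,y)" using h vw xw1 by simp
                  then have "(w,u) \<in> cls (y,w)" by (rule cls_rev)
                  then have "(y,w) \<in> cls (w,u)" by (rule cls_sym)
                  then show False using core2[OF uT(1) yT(1) uT(2)] by blast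
                qed
              next
                case False
                then have yw: "y = w" using xw by blast
                then have xT: "x \<in> T" "x \<noteq> w" using h False by auto
                show False
                proof (cases "u = w")
                  case True
                  then have vT: "v \<in> T" "v \<noteq> x" using h neq yw by auto
                  have "(w,v) \<in> cls (x,w)" using h True yw by simp
                  then have "(x,w) \<in> cls (w,v)" by (rule cls_sym)
                  then show False using core2[OF vT(1) xT(1) vT(2)] by blast
                next
                  case False
                  then have vw: "v = w" using uw by blast
                  then have uT: "u \<in> T" "u \<noteq> x" using h neq yw False by auto
                  have "(u,w) \<in> cls (x,w)" using h vw yw by simp
                  then have "(w,u) \<in> cls (w,x)" by (rule cls_rev)
                  then show False using core2[OF xT(1) uT(1) uT(2)[symmetric]] by blast
                qed
              qed
            qed
          qed
        qed
      qed
      have finW: "finite ?W" using finT by blast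
      have cW: "2 \<le> card ?W"
      proof -
        have "card T \<le> card ?W" using finW by (intro card_mono) auto
        then show ?thesis using simplex_fin[OF ST] by simp
      qed
      have wV: "w \<in> V" using E_V[OF B1[OF t0'(1)]] by blast
      have subW: "?W \<subseteq> V" using wV ST unfolding simplex_def by blast
      have ceW: "\<forall>x\<in>?W. \<forall>y\<in>?W. x \<noteq> y \<longrightarrow> (x,y) \<in> E"
      proof (intro ballI impI)
        fix x y assume "x \<in> ?W" "y \<in> ?W" "x \<noteq> y"
        then consider "x \<in> T" "y \<in> T" | "x = w" "y \<in> T" | "y = w" "x \<in> T" by blast
        then show "(x,y) \<in> E"
        proof cases
          case 1 then show ?thesis using simplex_E[OF ST] \<open>x \<noteq> y\<close> by blast
        next
          case 2 then show ?thesis using E_sym[OF B1[of y]] by blast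
        next
          case 3 then show ?thesis using B1[of x] by blast
        qed
      qed
      have "simplex V E ?W" unfolding simplex_iff using finW cW subW ceW condW by (intro conjI)
      moreover have "T \<subset> ?W" using w by blast
      ultimately show False using MT unfolding maximal_simplex_def by blast
    qed
  qed
  have "S' = T"
  proof (rule ccontr)
    assume "S' \<noteq> T"
    then have "S' \<subset> T" using sub by blast
    then show False using MS' ST unfolding maximal_simplex_def by blast
  qed
  then show ?thesis using mxT by simp
qed

end

theorem corollary4p7:
  fixes V :: "'a set" and E :: "('a \<times> 'a) set" and S S' :: "'a set"
  assumes "undirected_graph V E"
    and "maximal_simplex V E S" and "maximal_simplex V E S'"
    and "multiplex E S \<inter> multiplex E S' \<noteq> {}"
  shows "multiplex E S = multiplex E S'"
proof -
  interpret ug V E using assms(1) by (unfold_locales)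
  have S: "simplex V E S" and S': "simplex V E S'"
    using assms(2,3) unfolding maximal_simplex_def by blast+
  have e1: "multiplex E S = mx S" by (rule multiplex_eq) (use simplex_E[OF S] in blast)
  have e2: "multiplex E S' = mx S'" by (rule multiplex_eq) (use simplex_E[OF S'] in blast)
  show ?thesis using main[OF assms(2,3)] assms(4) e1 e2 by simp
qed

end
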